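(* Let $\mathcal{S}=(X,\xrightarrow{\Sigma},\le)$ be a positive very-WSTS and let $x,y\in X$. Then $y$ is repeatedly coverable from $x$ if and only if there exist states $c,d$ of the stuttering automaton $\mathcal{A}_{\downarrow x}$ and $w\in\Sigma^+$ such that $d$ can be reached from $c$ by reading $w$ in $\mathcal{A}_{\downarrow x}$, $\mathrm{numaccel}(c)=\mathrm{numaccel}(d)$, $w$ is positive, and $y\in\mathrm{ideal}(c)$.
   Context: A (labeled, ordered) transition system is $\mathcal{S}=(X,\xrightarrow{\Sigma},\le)$: $X$ a set, $\Sigma$ a finite alphabet, $\xrightarrow{a}\subseteq X\times X$, $\le$ a quasi-ordering; relations extend to words ($x\xrightarrow{+}y$ means $x\xrightarrow{w}y$ for some $w\in\Sigma^+$, $x\xrightarrow{*}y$ for some $w\in\Sigma^*$). $\mathrm{Post}(x,w)=\{y:x\xrightarrow{w}y\}$, extended to sets by union; $\downarrow D=\{x:\exists y\in D,\,x\le y\}$. WSTS: $\le$ wqo and monotone ($x\xrightarrow{a}y$, $x'\ge x$ imply $x'\xrightarrow{w}y'\ge y$ for some $w$). Strong monotonicity: $x\xrightarrow{a}y$, $x'\ge x$ imply $x'\xrightarrow{a}y'$, $y'\ge y$; strong-strict: additionally $x'>x$ yields such $y'>y$. Deterministic: at most one $a$-successor. Ideals: nonempty downward-closed directed subsets; $\mathrm{Idl}(X)$. Completion $\widehat{\mathcal{S}}=(\mathrm{Idl}(X),\Rightarrow_\Sigma,\subseteq)$, $I\xRightarrow{a}J$ iff $J$ is a $\subseteq$-maximal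 ideal included in $\downarrow\mathrm{Post}(I,a)$; when deterministic, $w(I)$ is the unique $J$ with $I\xRightarrow{w}J$ if defined. $w^\infty(I)=\bigcup_kw^k(I)$ if $I\subset w(I)$, else $I$. Levels: $\mathrm{Idl}_0(X)=\mathrm{Idl}(X)$, $\mathrm{Idl}_n(X)$ = unions of strictly increasing sequences in $\mathrm{Idl}_{n-1}(X)$; finitely many levels if some $\mathrm{Idl}_n(X)=\emptyset$. Very-WSTS: WSTS with strong monotonicity whose completion is a deterministic WSTS ($\subseteq$ a wqo on ideals) with strong-strict monotonicity, and $\mathrm{Idl}(X)$ has finitely many levels. Positivity: $w$ is positive for $x$ if $x\xrightarrow{w}z$ for some $z\ge x$; $w$ is positive if it is positive for every $x$ with $\mathrm{Post}(x,w)\ne\emptyset$; $\mathcal{S}$ is positive if every word that is positive for some state is positive. $y$ is repeatedly coverable from $x$ if there are $z_0,z_1,\ldots$ with $x\xrightarrow{*}z_0\xrightarrow{+}z_1\xrightarrow{+}\cdots$ and $z_i\ge y$ for all $i$. Ideal Karp-Miller algorithm on input $(\mathcal{S},I_0)$ (terminates for very-WSTS): builds a tree with node labels $(\mathrm{ideal}(c),\mathrm{numaccel}(c))$ and letter-labeled arcs, starting with root $(I_0,0)$. While a node $c:(I,n)$ is unmarked: if a proper ancestor has ideal $I$, mark $c$; otherwise, if a proper ancestor $c'$ has $\mathrm{ideal}(c')\subset I$ and $\mathrm{numaccel}(c')=n$, relabel $c$ by $(w^\infty(I),n+1)$ with $w$ the arc-label word from $c'$ to $c$; then, with $(I,n)$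 the current label, add for each $a$ with $a(I)$ defined a child $(a(I),n)$ via an $a$-arc; mark $c$. The stuttering automaton $\mathcal{A}_{I_0}$: states are the nodes of the returned tree, all accepting, initial state the root, transitions the arcs plus an $\varepsilon$-transition from each leaf $c$ to any ancestor $c'$ with $\mathrm{ideal}(c')=\mathrm{ideal}(c)$. Reading $w$ allows $\varepsilon$-transitions. *)

theory Defs
  imports Main
begin

text \<open>States are the elements of type 'x
  (so X = UNIV), letters are of type 'a (finite in the theorem), the transition
  relation is T a x y (x --a--> y), and le is the quasi-ordering.\<close>

fun steps :: "('a \<Rightarrow> 'x \<Rightarrow> 'x \<Rightarrow> bool) \<Rightarrow> 'a list \<Rightarrow> 'x \<Rightarrow> 'x \<Rightarrow> bool" where
  "steps T [] x y = (x = y)"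
| "steps T (a # w) x y = (\<exists>z. T a x z \<and> steps T w z y)"

definition qo_on :: "'x set \<Rightarrow> ('x \<Rightarrow> 'x \<Rightarrow> bool) \<Rightarrow> bool" where
  "qo_on S le \<longleftrightarrow> (\<forall>x\<in>S. le x x) \<and> (\<forall>x\<in>S. \<forall>y\<in>S. \<forall>z\<in>S. le x y \<longrightarrow> le y z \<longrightarrow> le x z)"

definition wqo_on :: "'x set \<Rightarrow> ('x \<Rightarrow> 'x \<Rightarrow> bool) \<Rightarrow> bool" where
  "wqo_on S le \<longleftrightarrow> qo_on S le \<and>
     (\<forall>f :: nat \<Rightarrow> 'x. (\<forall>i. f i \<in> S) \<longrightarrow> (\<exists>i j. i < j \<and> le (f i) (f j)))"

definition strictly :: "('x \<Rightarrow> 'x \<Rightarrow> bool) \<Rightarrow> 'x \<Rightarrow> 'x \<Rightarrow> bool" where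
  "strictly le x y \<longleftrightarrow> le x y \<and> \<not> le y x"

definition monotone_ts :: "'x set \<Rightarrow> ('a \<Rightarrow> 'x \<Rightarrow> 'x \<Rightarrow> bool) \<Rightarrow> ('x \<Rightarrow> 'x \<Rightarrow> bool) \<Rightarrow> bool" where
  "monotone_ts S T le \<longleftrightarrow> (\<forall>a x y x'. x \<in> S \<longrightarrow> y \<in> S \<longrightarrow> x' \<in> S \<longrightarrow> T a x y \<longrightarrow> le x x' \<longrightarrow>
      (\<exists>w y'. y' \<in> S \<and> steps T w x' y' \<and> le y y'))"

definition strong_mono :: "'x set \<Rightarrow> ('a \<Rightarrow> 'x \<Rightarrow> 'x \<Rightarrow> bool) \<Rightarrow> ('x \<Rightarrow> 'x \<Rightarrow> bool) \<Rightarrow> bool" where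
  "strong_mono S T le \<longleftrightarrow> (\<forall>a x y x'. x \<in> S \<longrightarrow> y \<in> S \<longrightarrow> x' \<in> S \<longrightarrow> T a x y \<longrightarrow> le x x' \<longrightarrow>
      (\<exists>y'. y' \<in> S \<and> T a x' y' \<and> le y y'))"

definition strong_strict_mono :: "'x set \<Rightarrow> ('a \<Rightarrow> 'x \<Rightarrow> 'x \<Rightarrow> bool) \<Rightarrow> ('x \<Rightarrow> 'x \<Rightarrow> bool) \<Rightarrow> bool" where
  "strong_strict_mono S T le \<longleftrightarrow> strong_mono S T le \<and>
     (\<forall>a x y x'. x \<in> S \<longrightarrow> y \<in> S \<longrightarrow> x' \<in> S \<longrightarrow> T a x y \<longrightarrow> strictly le x x' \<longrightarrow>
      (\<exists>y'. y' \<in> S \<and> T a x' y' \<and> strictly le y y'))"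

definition deterministic :: "('a \<Rightarrow> 'x \<Rightarrow> 'x \<Rightarrow> bool) \<Rightarrow> bool" where
  "deterministic T \<longleftrightarrow> (\<forall>a x y z. T a x y \<longrightarrow> T a x z \<longrightarrow> y = z)"

definition WSTS_on :: "'x set \<Rightarrow> ('a \<Rightarrow> 'x \<Rightarrow> 'x \<Rightarrow> bool) \<Rightarrow> ('x \<Rightarrow> 'x \<Rightarrow> bool) \<Rightarrow> bool" where
  "WSTS_on S T le \<longleftrightarrow> wqo_on S le \<and> monotone_ts S T le"

definition dc :: "('x \<Rightarrow> 'x \<Rightarrow> bool) \<Rightarrow> 'x set \<Rightarrow> 'x set" where
  "dc le D = {x. \<exists>y\<in>D. le x y}"

definition down_closed :: "('x \<Rightarrow> 'x \<Rightarrow> bool) \<Rightarrow> 'x set \<Rightarrow> bool" where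
  "down_closed le D \<longleftrightarrow> (\<forall>x y. y \<in> D \<longrightarrow> le x y \<longrightarrow> x \<in> D)"

definition directed :: "('x \<Rightarrow> 'x \<Rightarrow> bool) \<Rightarrow> 'x set \<Rightarrow> bool" where
  "directed le D \<longleftrightarrow> (\<forall>x\<in>D. \<forall>y\<in>D. \<exists>z\<in>D. le x z \<and> le y z)"

definition Idl :: "('x \<Rightarrow> 'x \<Rightarrow> bool) \<Rightarrow> 'x set set" where
  "Idl le = {D. D \<noteq> {} \<and> down_closed le D \<and> directed le D}"

definition Post :: "('a \<Rightarrow> 'x \<Rightarrow> 'x \<Rightarrow> bool) \<Rightarrow> 'x set \<Rightarrow> 'a \<Rightarrow> 'x set" where
  "Post T I a = {y. \<exists>x\<in>I. T a x y}"

definition cstep :: "('a \<Rightarrow> 'x \<Rightarrow> 'x \<Rightarrow> bool) \<Rightarrow> ('x \<Rightarrow> 'x \<Rightarrow> bool) \<Rightarrow> 'a \<Rightarrow> 'x set \<Rightarrow> 'x set \<Rightarrow> bool" where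
  "cstep T le a I J \<longleftrightarrow> I \<in> Idl le \<and> J \<in> Idl le \<and> J \<subseteq> dc le (Post T I a) \<and>
     (\<forall>K\<in>Idl le. J \<subseteq> K \<longrightarrow> K \<subseteq> dc le (Post T I a) \<longrightarrow> K = J)"

fun Idl_level :: "('x \<Rightarrow> 'x \<Rightarrow> bool) \<Rightarrow> nat \<Rightarrow> 'x set set" where
  "Idl_level le 0 = Idl le"
| "Idl_level le (Suc n) =
     {\<Union> (range f) | f. (\<forall>i. f i \<in> Idl_level le n) \<and> (\<forall>i. f i \<subset> f (Suc i))}"

definition very_WSTS :: "('a \<Rightarrow> 'x \<Rightarrow> 'x \<Rightarrow> bool) \<Rightarrow> ('x \<Rightarrow> 'x \<Rightarrow> bool) \<Rightarrow> bool" where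
  "very_WSTS T le \<longleftrightarrow> WSTS_on UNIV T le \<and> strong_mono UNIV T le \<and>
     deterministic (cstep T le) \<and> WSTS_on (Idl le) (cstep T le) (\<subseteq>) \<and>
     strong_strict_mono (Idl le) (cstep T le) (\<subseteq>) \<and> (\<exists>n. Idl_level le n = {})"

text \<open>a(I) and w(I) in the (deterministic) completion; None = undefined.\<close>
definition capp :: "('a \<Rightarrow> 'x \<Rightarrow> 'x \<Rightarrow> bool) \<Rightarrow> ('x \<Rightarrow> 'x \<Rightarrow> bool) \<Rightarrow> 'a \<Rightarrow> 'x set \<Rightarrow> 'x set option" where
  "capp T le a I = (if \<exists>J. cstep T le a I J then Some (THE J. cstep T le a I J) else None)"

fun wapp :: "('a \<Rightarrow> 'x \<Rightarrow> 'x \<Rightarrow> bool) \<Rightarrow> ('x \<Rightarrow> 'x \<Rightarrow> bool) \<Rightarrow> 'a list \<Rightarrow> 'x set \<Rightarrow> 'x set option" where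
  "wapp T le [] I = Some I"
| "wapp T le (a # w) I = (case capp T le a I of None \<Rightarrow> None | Some J \<Rightarrow> wapp T le w J)"

definition winf :: "('a \<Rightarrow> 'x \<Rightarrow> 'x \<Rightarrow> bool) \<Rightarrow> ('x \<Rightarrow> 'x \<Rightarrow> bool) \<Rightarrow> 'a list \<Rightarrow> 'x set \<Rightarrow> 'x set" where
  "winf T le w I = (if \<exists>J. wapp T le w I = Some J \<and> I \<subset> J
       then \<Union> {K. \<exists>k. wapp T le (concat (replicate k w)) I = Some K}
       else I)"

definition positive_for :: "('a \<Rightarrow> 'x \<Rightarrow> 'x \<Rightarrow> bool) \<Rightarrow> ('x \<Rightarrow> 'x \<Rightarrow> bool) \<Rightarrow> 'a list \<Rightarrow> 'x \<Rightarrow> bool" where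
  "positive_for T le w x \<longleftrightarrow> (\<exists>z. steps T w x z \<and> le x z)"

definition positive_word :: "('a \<Rightarrow> 'x \<Rightarrow> 'x \<Rightarrow> bool) \<Rightarrow> ('x \<Rightarrow> 'x \<Rightarrow> bool) \<Rightarrow> 'a list \<Rightarrow> bool" where
  "positive_word T le w \<longleftrightarrow> (\<forall>x. (\<exists>y. steps T w x y) \<longrightarrow> positive_for T le w x)"

definition positive_ts :: "('a \<Rightarrow> 'x \<Rightarrow> 'x \<Rightarrow> bool) \<Rightarrow> ('x \<Rightarrow> 'x \<Rightarrow> bool) \<Rightarrow> bool" where
  "positive_ts T le \<longleftrightarrow> (\<forall>w. (\<exists>x. positive_for T le w x) \<longrightarrow> positive_word T le w)"

definition rep_coverable :: "('a \<Rightarrow> 'x \<Rightarrow> 'x \<Rightarrow> bool) \<Rightarrow> ('x \<Rightarrow> 'x \<Rightarrow> bool) \<Rightarrow> 'x \<Rightarrow> 'x \<Rightarrow> bool" where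
  "rep_coverable T le x y \<longleftrightarrow> (\<exists>z :: nat \<Rightarrow> 'x.
      (\<exists>w. steps T w x (z 0)) \<and>
      (\<forall>i. \<exists>w. w \<noteq> [] \<and> steps T w (z i) (z (Suc i))) \<and>
      (\<forall>i. le y (z i)))"

text \<open>A tree is represented by its set N of nodes, each node being the word of arc
  labels from the root (so [] is the root, u @ [a] is the a-child of u), together
  with the final labelling lab u = (ideal u, numaccel u).
  km_pre gives the label a node receives when it is created (before processing).\<close>

definition km_pre :: "('a \<Rightarrow> 'x \<Rightarrow> 'x \<Rightarrow> bool) \<Rightarrow> ('x \<Rightarrow> 'x \<Rightarrow> bool) \<Rightarrow> 'x set \<Rightarrow>
    ('a list \<Rightarrow> 'x set \<times> nat) \<Rightarrow> 'a list \<Rightarrow> 'x set \<times> nat" where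
  "km_pre T le I0 lab u = (if u = [] then (I0, 0)
     else (the (capp T le (last u) (fst (lab (butlast u)))), snd (lab (butlast u))))"

definition proper_anc :: "'a list \<Rightarrow> 'a list \<Rightarrow> bool" where
  "proper_anc v u \<longleftrightarrow> (\<exists>w. w \<noteq> [] \<and> u = v @ w)"

text \<open>Node u is marked without expansion because a proper ancestor has the same ideal.\<close>
definition km_rep :: "('a \<Rightarrow> 'x \<Rightarrow> 'x \<Rightarrow> bool) \<Rightarrow> ('x \<Rightarrow> 'x \<Rightarrow> bool) \<Rightarrow> 'x set \<Rightarrow>
    ('a list \<Rightarrow> 'x set \<times> nat) \<Rightarrow> 'a list \<Rightarrow> bool" where
  "km_rep T le I0 lab u \<longleftrightarrow> (\<exists>v. proper_anc v u \<and> fst (lab v) = fst (km_pre T le I0 lab u))"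

text \<open>(N, lab) is a tree returned by the Ideal Karp-Miller algorithm on (S, I0)
  (for some resolution of the choice of the ancestor used for acceleration).\<close>
definition km_tree :: "('a \<Rightarrow> 'x \<Rightarrow> 'x \<Rightarrow> bool) \<Rightarrow> ('x \<Rightarrow> 'x \<Rightarrow> bool) \<Rightarrow> 'x set \<Rightarrow>
    'a list set \<Rightarrow> ('a list \<Rightarrow> 'x set \<times> nat) \<Rightarrow> bool" where
  "km_tree T le I0 N lab \<longleftrightarrow>
     finite N \<and> [] \<in> N \<and>
     (\<forall>u a. u @ [a] \<in> N \<longrightarrow> u \<in> N) \<and>
     (\<forall>u\<in>N. \<forall>a. u @ [a] \<in> N \<longleftrightarrow> \<not> km_rep T le I0 lab u \<and> capp T le a (fst (lab u)) \<noteq> None) \<and>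
     (\<forall>u\<in>N. let I = fst (km_pre T le I0 lab u); n = snd (km_pre T le I0 lab u) in
        (if km_rep T le I0 lab u then lab u = (I, n)
         else if (\<exists>v. proper_anc v u \<and> fst (lab v) \<subset> I \<and> snd (lab v) = n)
         then (\<exists>v w. w \<noteq> [] \<and> u = v @ w \<and> fst (lab v) \<subset> I \<and> snd (lab v) = n \<and>
                     lab u = (winf T le w I, n + 1))
         else lab u = (I, n)))"

definition km_leaf :: "'a list set \<Rightarrow> 'a list \<Rightarrow> bool" where
  "km_leaf N u \<longleftrightarrow> u \<in> N \<and> (\<forall>a. u @ [a] \<notin> N)"

text \<open>Transitions: Some a = arc labelled a, None = epsilon-transition.\<close>
definition aut_step :: "'a list set \<Rightarrow> ('a list \<Rightarrow> 'x set \<times> nat) \<Rightarrow> 'a option \<Rightarrow> 'a list \<Rightarrow> 'a list \<Rightarrow> bool" where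
  "aut_step N lab l u v \<longleftrightarrow> (case l of
      Some a \<Rightarrow> u \<in> N \<and> v = u @ [a] \<and> v \<in> N
    | None \<Rightarrow> km_leaf N u \<and> proper_anc v u \<and> fst (lab v) = fst (lab u))"

inductive aut_reads :: "'a list set \<Rightarrow> ('a list \<Rightarrow> 'x set \<times> nat) \<Rightarrow> 'a list \<Rightarrow> 'a list \<Rightarrow> 'a list \<Rightarrow> bool"
  for N lab where
  nil: "c \<in> N \<Longrightarrow> aut_reads N lab [] c c"
| eps: "aut_step N lab None c c' \<Longrightarrow> aut_reads N lab w c' d \<Longrightarrow> aut_reads N lab w c d"
| letter: "aut_step N lab (Some a) c c' \<Longrightarrow> aut_reads N lab w c' d \<Longrightarrow> aut_reads N lab (a # w) c d"

end

theory Submission imports Defs "HOL-Library.Infinite_Set" begin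

lemma steps_append: "steps T (u @ v) s t \<longleftrightarrow> (\<exists>m. steps T u s m \<and> steps T v m t)"
  by (induction u arbitrary: s) auto

lemma wapp_append: "wapp T le (u @ v) I = (case wapp T le u I of None \<Rightarrow> None | Some J \<Rightarrow> wapp T le v J)"
  by (induction u arbitrary: I) (auto split: option.splits)

lemma chain_union_Idl:
  assumes "C \<noteq> {}" "C \<subseteq> Idl le" "\<forall>A\<in>C. \<forall>B\<in>C. A \<subseteq> B \<or> B \<subseteq> A"
  shows "\<Union>C \<in> Idl le"
proof -
  have ne: "\<Union>C \<noteq> {}" using assms(1,2) by (auto simp: Idl_def)
  have dcl: "down_closed le (\<Union>C)" using assms(2) unfolding Idl_def down_closed_def by blast
  have dir: "directed le (\<Union>C)"
    unfolding directed_def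
  proof (intro ballI)
    fix a b assume "a \<in> \<Union>C" "b \<in> \<Union>C"
    then obtain A B where AB: "A \<in> C" "B \<in> C" "a \<in> A" "b \<in> B" by blast
    show "\<exists>z\<in>\<Union>C. le a z \<and> le b z"
    proof (cases "A \<subseteq> B")
      case True
      with AB assms(2) show ?thesis unfolding Idl_def directed_def by blast
    next
      case False
      then have "B \<subseteq> A" using assms(3) AB by blast
      with AB assms(2) show ?thesis unfolding Idl_def directed_def by blast
    qed
  qed
  show ?thesis using ne dcl dir by (simp add: Idl_def)
qed

lemma mono_seq_union_Idl:
  assumes "\<forall>i. f i \<in> Idl le" "\<forall>i. f i \<subseteq> f (Suc i)"
  shows "\<Union>(range f) \<in> Idl le"
proof (rule chain_union_Idl)
  have m: "mono f" using assms(2) by (simp add: mono_iff_le_Suc)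
  show "\<forall>A\<in>range f. \<forall>B\<in>range f. A \<subseteq> B \<or> B \<subseteq> A"
  proof (intro ballI)
    fix A B assume "A \<in> range f" "B \<in> range f"
    then obtain i j where "A = f i" "B = f j" by blast
    then show "A \<subseteq> B \<or> B \<subseteq> A" using m
      by (metis le_cases monoD)
  qed
qed (use assms in auto)

locale vw =
  fixes T :: "'a \<Rightarrow> 'x \<Rightarrow> 'x \<Rightarrow> bool" and le :: "'x \<Rightarrow> 'x \<Rightarrow> bool"
  assumes vw: "very_WSTS T le"
begin

lemma qo: "qo_on UNIV le"
  using vw unfolding very_WSTS_def WSTS_on_def wqo_on_def by blast

lemma refl: "le s s"
  using qo unfolding qo_on_def by blast

lemma trans: "le a b \<Longrightarrow> le b c \<Longrightarrow> le a c"
  using qo unfolding qo_on_def by blast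

lemma wqo': "wqo_on UNIV le"
  using vw unfolding very_WSTS_def WSTS_on_def by blast

lemma wqo: "\<exists>i j::nat. i < j \<and> le (f i) (f j)"
  using wqo' unfolding wqo_on_def by simp

lemma smono: "T a s s' \<Longrightarrow> le s t \<Longrightarrow> \<exists>t'. T a t t' \<and> le s' t'"
  using vw unfolding very_WSTS_def strong_mono_def by blast

lemma det: "cstep T le a I J \<Longrightarrow> cstep T le a I J' \<Longrightarrow> J = J'"
  using vw unfolding very_WSTS_def deterministic_def by blast

lemma cstep_Idl: "cstep T le a I J \<Longrightarrow> I \<in> Idl le \<and> J \<in> Idl le"
  unfolding cstep_def by blast

lemma sstrict: "cstep T le a I J \<Longrightarrow> I' \<in> Idl le \<Longrightarrow> I \<subset> I' \<Longrightarrow> \<exists>J'. cstep T le a I' J' \<and> J \<subset> J'"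
proof -
  assume c: "cstep T le a I J" and i: "I' \<in> Idl le" and s: "I \<subset> I'"
  have "strong_strict_mono (Idl le) (cstep T le) (\<subseteq>)" using vw unfolding very_WSTS_def by blast
  then have "\<forall>a x y x'. x \<in> Idl le \<longrightarrow> y \<in> Idl le \<longrightarrow> x' \<in> Idl le \<longrightarrow> cstep T le a x y \<longrightarrow> strictly (\<subseteq>) x x' \<longrightarrow>
      (\<exists>y'. y' \<in> Idl le \<and> cstep T le a x' y' \<and> strictly (\<subseteq>) y y')"
    unfolding strong_strict_mono_def by blast
  moreover have "strictly (\<subseteq>) I I'" using s unfolding strictly_def by blast
  ultimately obtain J' where "cstep T le a I' J'" "strictly (\<subseteq>) J J'"
    using c i cstep_Idl[OF c] by blast
  then show ?thesis unfolding strictly_def by blast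
qed

lemma levels: "\<exists>n. Idl_level le n = {}"
  using vw unfolding very_WSTS_def by blast

lemma steps_mono: "steps T w s s' \<Longrightarrow> le s t \<Longrightarrow> \<exists>t'. steps T w t t' \<and> le s' t'"
proof (induction w arbitrary: s t)
  case Nil then show ?case by simp
next
  case (Cons a w)
  then obtain m where m: "T a s m" "steps T w m s'" by auto
  obtain m' where m': "T a t m'" "le m m'" using smono[OF m(1) Cons.prems(2)] by blast
  obtain t' where "steps T w m' t'" "le s' t'" using Cons.IH[OF m(2) m'(2)] by blast
  with m' show ?case by auto
qed

lemma dc_single_Idl: "dc le {s} \<in> Idl le"
  unfolding Idl_def dc_def down_closed_def directed_def
  using refl trans by blast

lemma Zorn_step:
  assumes I: "I \<in> Idl le" and p: "p \<in> Post T I a"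
  shows "\<exists>J. cstep T le a I J \<and> p \<in> J"
proof -
  let ?D = "dc le (Post T I a)"
  let ?A = "{K. K \<in> Idl le \<and> dc le {p} \<subseteq> K \<and> K \<subseteq> ?D}"
  have dcD: "dc le {p} \<subseteq> ?D" using p unfolding dc_def by blast
  have "\<forall>C\<in>chains ?A. \<exists>U\<in>?A. \<forall>X\<in>C. X \<subseteq> U"
  proof
    fix C assume C: "C \<in> chains ?A"
    show "\<exists>U\<in>?A. \<forall>X\<in>C. X \<subseteq> U"
    proof (cases "C = {}")
      case True then show ?thesis using dc_single_Idl dcD by blast
    next
      case False
      have "\<Union>C \<in> Idl le" apply (rule chain_union_Idl[OF False])
        using C unfolding chains_def chain_subset_def by blast+
      moreover have "dc le {p} \<subseteq> \<Union>C" "\<Union>C \<subseteq> ?D" using C False unfolding chains_def by blast+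
      ultimately show ?thesis by blast
    qed
  qed
  from Zorn_Lemma2[OF this] obtain M where M: "M \<in> ?A" "\<forall>X\<in>?A. M \<subseteq> X \<longrightarrow> X = M" by blast
  have "cstep T le a I M"
    unfolding cstep_def using I M by blast
  moreover have "p \<in> M" using M refl unfolding dc_def by blast
  ultimately show ?thesis by blast
qed

lemma capp_Some: "cstep T le a I J \<Longrightarrow> capp T le a I = Some J"
proof -
  assume c: "cstep T le a I J"
  have "(THE J. cstep T le a I J) = J"
  proof (rule the_equality)
    show "cstep T le a I J" by (rule c)
    fix J' assume "cstep T le a I J'" then show "J' = J" using det[OF c] by simp
  qed
  then show ?thesis using c unfolding capp_def by auto
qed

lemma capp_SomeD: "capp T le a I = Some J \<Longrightarrow> cstep T le a I J"
proof -
  assume c: "capp T le a I = Some J"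
  then obtain J0 where j0: "cstep T le a I J0" unfolding capp_def by (auto split: if_splits)
  then have "capp T le a I = Some J0" by (rule capp_Some)
  with c j0 show ?thesis by simp
qed

lemma cstep_exact: "cstep T le a I J \<Longrightarrow> J = dc le (Post T I a)"
proof
  assume c: "cstep T le a I J"
  then show "J \<subseteq> dc le (Post T I a)" unfolding cstep_def by blast
  show "dc le (Post T I a) \<subseteq> J"
  proof
    fix q assume "q \<in> dc le (Post T I a)"
    then obtain p where p: "p \<in> Post T I a" "le q p" unfolding dc_def by blast
    obtain J' where "cstep T le a I J'" "p \<in> J'" using Zorn_step[OF _ p(1)] cstep_Idl[OF c] by blast
    then have "p \<in> J" using det[OF c] by simp
    then show "q \<in> J" using p(2) cstep_Idl[OF c] unfolding Idl_def down_closed_def by blast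
  qed
qed

end

context vw begin

lemma level_Idl: "J \<in> Idl_level le k \<Longrightarrow> J \<in> Idl le"
proof (induction k arbitrary: J)
  case 0 then show ?case by simp
next
  case (Suc k)
  then obtain f where f: "J = \<Union>(range f)" "\<forall>i. f i \<in> Idl_level le k" "\<forall>i. f i \<subset> f (Suc i)" by auto
  show ?case unfolding f(1) apply (rule mono_seq_union_Idl) using f Suc.IH by auto
qed

lemma Post_Union: "Post T (\<Union>(range f)) a = (\<Union>i. Post T (f i) a)"
  unfolding Post_def by blast

lemma dc_Union: "dc le (\<Union>i. A i) = (\<Union>i. dc le (A i))"
  unfolding dc_def by blast

lemma dc_mono: "A \<subseteq> B \<Longrightarrow> dc le A \<subseteq> dc le B"
  unfolding dc_def by blast

lemma Post_mono: "A \<subseteq> B \<Longrightarrow> Post T A a \<subseteq> Post T B a"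
  unfolding Post_def by blast

lemma cstep_ex: "I \<in> Idl le \<Longrightarrow> Post T I a \<noteq> {} \<Longrightarrow> cstep T le a I (dc le (Post T I a))"
proof -
  assume I: "I \<in> Idl le" and ne: "Post T I a \<noteq> {}"
  then obtain p where "p \<in> Post T I a" by blast
  from Zorn_step[OF I this] obtain J where "cstep T le a I J" by blast
  with cstep_exact show ?thesis by metis
qed

lemma level_cstep: "J \<in> Idl_level le k \<Longrightarrow> cstep T le a J J' \<Longrightarrow> J' \<in> Idl_level le k"
proof (induction k arbitrary: J J')
  case 0 then show ?case by (simp add: cstep_def)
next
  case (Suc k)
  then obtain f where f: "J = \<Union>(range f)" "\<forall>i. f i \<in> Idl_level le k" "\<forall>i. f i \<subset> f (Suc i)" by auto
  have fI: "f i \<in> Idl le" for i using f(2) level_Idl by blast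
  have mono: "i \<le> j \<Longrightarrow> f i \<subseteq> f j" for i j
    using f(3) by (metis lift_Suc_mono_le psubset_imp_subset)
  have J': "J' = dc le (Post T J a)" using cstep_exact[OF Suc.prems(2)] .
  have "J' \<noteq> {}" using Suc.prems(2) unfolding cstep_def Idl_def by blast
  then have "Post T J a \<noteq> {}" using J' unfolding dc_def by blast
  then obtain i0 where i0: "Post T (f i0) a \<noteq> {}" unfolding f(1) Post_Union by blast
  define G where "G i = dc le (Post T (f (i + i0)) a)" for i
  have neG: "Post T (f (i + i0)) a \<noteq> {}" for i
    using i0 Post_mono[OF mono[of i0 "i + i0"]] by auto
  have cG: "cstep T le a (f (i + i0)) (G i)" for i
    unfolding G_def using cstep_ex[OF fI neG] .
  have GL: "G i \<in> Idl_level le k" for i using Suc.IH[OF f(2)[rule_format] cG] .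
  have Gs: "G i \<subset> G (Suc i)" for i
  proof -
    have "f (i + i0) \<subset> f (Suc i + i0)" using f(3) by simp
    from sstrict[OF cG[of i] fI this] obtain J'' where "cstep T le a (f (Suc i + i0)) J''" "G i \<subset> J''" by blast
    with det[OF cG[of "Suc i"]] show ?thesis by simp
  qed
  have "J' = \<Union>(range G)"
  proof
    show "\<Union>(range G) \<subseteq> J'" unfolding J' G_def f(1) Post_Union dc_Union by blast
    show "J' \<subseteq> \<Union>(range G)"
    proof
      fix q assume "q \<in> J'"
      then obtain i where q: "q \<in> dc le (Post T (f i) a)" unfolding J' f(1) Post_Union dc_Union by blast
      show "q \<in> \<Union>(range G)"
      proof (cases "i \<le> i0")
        case True
        then have "q \<in> G 0" using q dc_mono[OF Post_mono[OF mono[OF True]]] unfolding G_def by auto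
        then show ?thesis by blast
      next
        case False
        then have "i = (i - i0) + i0" by simp
        then have "q \<in> G (i - i0)" using q unfolding G_def by metis
        then show ?thesis by blast
      qed
    qed
  qed
  then show ?case using GL Gs by auto
qed

lemma wapp_Idl: "I \<in> Idl le \<Longrightarrow> wapp T le w I = Some K \<Longrightarrow> K \<in> Idl le"
proof (induction w arbitrary: I)
  case Nil then show ?case by simp
next
  case (Cons a w)
  then obtain J where J: "capp T le a I = Some J" "wapp T le w J = Some K" by (auto split: option.splits)
  have "J \<in> Idl le" using capp_SomeD[OF J(1)] cstep_Idl by blast
  then show ?case using Cons.IH J(2) by blast
qed

lemma wapp_level: "I \<in> Idl_level le k \<Longrightarrow> wapp T le w I = Some K \<Longrightarrow> K \<in> Idl_level le k"
proof (induction w arbitrary: I)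
  case Nil then show ?case by simp
next
  case (Cons a w)
  then obtain J where J: "capp T le a I = Some J" "wapp T le w J = Some K" by (auto split: option.splits)
  have "J \<in> Idl_level le k" using level_cstep[OF Cons.prems(1) capp_SomeD[OF J(1)]] .
  then show ?case using Cons.IH J(2) by blast
qed

lemma wapp_sstrict: "wapp T le w I = Some K \<Longrightarrow> I \<subset> I' \<Longrightarrow> I' \<in> Idl le \<Longrightarrow>
   \<exists>K'. wapp T le w I' = Some K' \<and> K \<subset> K'"
proof (induction w arbitrary: I I')
  case Nil then show ?case by simp
next
  case (Cons a w)
  then obtain J where J: "capp T le a I = Some J" "wapp T le w J = Some K" by (auto split: option.splits)
  from sstrict[OF capp_SomeD[OF J(1)] Cons.prems(3,2)] obtain J' where
    J': "cstep T le a I' J'" "J \<subset> J'" by blast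
  have "J' \<in> Idl le" using J'(1) cstep_Idl by blast
  from Cons.IH[OF J(2) J'(2) this] obtain K' where "wapp T le w J' = Some K'" "K \<subset> K'" by blast
  then show ?case using capp_Some[OF J'(1)] by simp
qed

lemma rep_Suc: "concat (replicate (Suc j) w) = concat (replicate j w) @ w"
  by (induction j) auto

lemma winf_level:
  assumes I: "I \<in> Idl_level le k" and Q: "wapp T le w I = Some Q" and s: "I \<subset> Q"
  shows "winf T le w I \<in> Idl_level le (Suc k)"
proof -
  let ?R = "\<lambda>j. concat (replicate j w)"
  have II: "I \<in> Idl le" using level_Idl[OF I] .
  have claim: "\<exists>A B. wapp T le (?R j) I = Some A \<and> wapp T le (?R (Suc j)) I = Some B \<and> A \<subset> B \<and> A \<in> Idl_level le k" for j
  proof (induction j)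
    case 0 then show ?case using Q s I by simp
  next
    case (Suc j)
    then obtain A B where AB: "wapp T le (?R j) I = Some A" "wapp T le (?R (Suc j)) I = Some B" "A \<subset> B" "A \<in> Idl_level le k" by blast
    have wA: "wapp T le w A = Some B" using AB(1,2) unfolding rep_Suc wapp_append by simp
    have BI: "B \<in> Idl le" using wapp_Idl[OF II AB(2)] .
    obtain B' where B': "wapp T le w B = Some B'" "B \<subset> B'" using wapp_sstrict[OF wA AB(3) BI] by blast
    have "wapp T le (?R (Suc (Suc j))) I = Some B'"
      using AB(2) B'(1) unfolding rep_Suc[of "Suc j"] wapp_append by simp
    moreover have "B \<in> Idl_level le k" using wapp_level[OF I AB(2)] .
    ultimately show ?case using AB(2) B'(2) by blast
  qed
  define f where "f j = the (wapp T le (?R j) I)" for j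
  have fS: "wapp T le (?R j) I = Some (f j)" for j using claim[of j] unfolding f_def by auto
  have fL: "f j \<in> Idl_level le k" for j using claim[of j] unfolding f_def by auto
  have fs: "f j \<subset> f (Suc j)" for j using claim[of j] fS[of j] fS[of "Suc j"] by auto
  have cond: "\<exists>J. wapp T le w I = Some J \<and> I \<subset> J" using Q s by blast
  have "winf T le w I = \<Union>(range f)"
    unfolding winf_def using cond fS by (auto; metis option.inject)
  then show ?thesis using fL fs by auto
qed

lemma winf_sup: "I \<subseteq> winf T le w I"
proof -
  have "wapp T le (concat (replicate 0 w)) I = Some I" by simp
  then have "I \<subseteq> \<Union> {K. \<exists>k. wapp T le (concat (replicate k w)) I = Some K}" by blast
  then show ?thesis unfolding winf_def by simp
qed

lemma winf_Idl: "I \<in> Idl le \<Longrightarrow> winf T le w I \<in> Idl le"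
proof (cases "\<exists>J. wapp T le w I = Some J \<and> I \<subset> J")
  case True
  assume I: "I \<in> Idl le"
  then have "I \<in> Idl_level le 0" by simp
  with True winf_level show ?thesis using level_Idl by blast
next
  case False
  assume I: "I \<in> Idl le"
  then show ?thesis using False unfolding winf_def by auto
qed

definition dominated :: "'x \<Rightarrow> 'x set \<Rightarrow> bool" where
  "dominated x0 I \<longleftrightarrow> (\<forall>e\<in>I. \<exists>p r. steps T p x0 r \<and> le e r)"

lemma dom_cstep: "dominated x0 I \<Longrightarrow> cstep T le a I J \<Longrightarrow> dominated x0 J"
  unfolding dominated_def
proof
  fix e assume d: "\<forall>e\<in>I. \<exists>p r. steps T p x0 r \<and> le e r" and c: "cstep T le a I J" and e: "e \<in> J"
  then have "e \<in> dc le (Post T I a)" unfolding cstep_def by blast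
  then obtain q i where q: "le e q" "T a i q" "i \<in> I" unfolding dc_def Post_def by blast
  obtain p r where pr: "steps T p x0 r" "le i r" using d q(3) by blast
  obtain r' where r': "T a r r'" "le q r'" using smono[OF q(2) pr(2)] by blast
  have "steps T (p @ [a]) x0 r'" using pr(1) r'(1) steps_append by fastforce
  moreover have "le e r'" using trans[OF q(1) r'(2)] .
  ultimately show "\<exists>p r. steps T p x0 r \<and> le e r" by blast
qed

lemma dom_wapp: "dominated x0 I \<Longrightarrow> wapp T le w I = Some K \<Longrightarrow> dominated x0 K"
proof (induction w arbitrary: I)
  case Nil then show ?case by simp
next
  case (Cons a w)
  then obtain J where J: "capp T le a I = Some J" "wapp T le w J = Some K" by (auto split: option.splits)
  have "dominated x0 J" using dom_cstep[OF Cons.prems(1) capp_SomeD[OF J(1)]] .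
  then show ?case using Cons.IH J(2) by blast
qed

lemma dom_winf: "dominated x0 I \<Longrightarrow> dominated x0 (winf T le w I)"
proof -
  assume d: "dominated x0 I"
  have "\<forall>K\<in>{K. \<exists>k. wapp T le (concat (replicate k w)) I = Some K}. dominated x0 K"
    using dom_wapp[OF d] by blast
  then have "dominated x0 (\<Union>{K. \<exists>k. wapp T le (concat (replicate k w)) I = Some K})"
    unfolding dominated_def by blast
  then show ?thesis using d unfolding winf_def by simp
qed

lemma exec_wapp: "I \<in> Idl le \<Longrightarrow> wapp T le w I = Some K \<Longrightarrow> \<exists>f\<in>I. \<exists>g. steps T w f g"
proof (induction w arbitrary: I)
  case Nil then show ?case by (auto simp: Idl_def)
next
  case (Cons a w)
  then obtain J where J: "capp T le a I = Some J" "wapp T le w J = Some K" by (auto split: option.splits)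
  have c: "cstep T le a I J" using capp_SomeD[OF J(1)] .
  then have JI: "J \<in> Idl le" using cstep_Idl by blast
  obtain f' g where fg: "f' \<in> J" "steps T w f' g" using Cons.IH[OF JI J(2)] by blast
  then have "f' \<in> dc le (Post T I a)" using c unfolding cstep_def by blast
  then obtain q i where q: "le f' q" "T a i q" "i \<in> I" unfolding dc_def Post_def by blast
  obtain g' where "steps T w q g'" using steps_mono[OF fg(2) q(1)] by blast
  then show ?case using q by auto
qed

end

locale km = vw T le for T :: "'a \<Rightarrow> 'x \<Rightarrow> 'x \<Rightarrow> bool" and le +
  fixes x0 :: 'x and N :: "'a list set" and lab :: "'a list \<Rightarrow> 'x set \<times> nat"
  assumes km: "km_tree T le (dc le {x0}) N lab"
begin

abbreviation "pre u \<equiv> km_pre T le (dc le {x0}) lab u"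
abbreviation "rep u \<equiv> km_rep T le (dc le {x0}) lab u"
abbreviation "idl u \<equiv> fst (lab u)"
abbreviation "na u \<equiv> snd (lab u)"

lemma finN: "finite N" using km unfolding km_tree_def by blast
lemma rootN: "[] \<in> N" using km unfolding km_tree_def by blast
lemma parN: "u @ [a] \<in> N \<Longrightarrow> u \<in> N" using km unfolding km_tree_def by blast
lemma child_iff: "u \<in> N \<Longrightarrow> u @ [a] \<in> N \<longleftrightarrow> \<not> rep u \<and> capp T le a (idl u) \<noteq> None"
  using km unfolding km_tree_def by blast

lemma lab_rule: "u \<in> N \<Longrightarrow>
  (if rep u then lab u = pre u
   else if (\<exists>v. proper_anc v u \<and> idl v \<subset> fst (pre u) \<and> na v = snd (pre u))
   then (\<exists>v w. w \<noteq> [] \<and> u = v @ w \<and> idl v \<subset> fst (pre u) \<and> na v = snd (pre u) \<and>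
                     lab u = (winf T le w (fst (pre u)), snd (pre u) + 1))
   else lab u = pre u)"
proof -
  assume u: "u \<in> N"
  have "\<forall>u\<in>N. let I = fst (pre u); n = snd (pre u) in
        (if rep u then lab u = (I, n)
         else if (\<exists>v. proper_anc v u \<and> fst (lab v) \<subset> I \<and> snd (lab v) = n)
         then (\<exists>v w. w \<noteq> [] \<and> u = v @ w \<and> fst (lab v) \<subset> I \<and> snd (lab v) = n \<and>
                     lab u = (winf T le w I, n + 1))
         else lab u = (I, n))" using km unfolding km_tree_def by blast
  from this[rule_format, OF u] show ?thesis unfolding Let_def prod.collapse .
qed

lemma lab_cases: "u \<in> N \<Longrightarrow> lab u = pre u \<or>
   (\<exists>v w. w \<noteq> [] \<and> u = v @ w \<and> idl v \<subset> fst (pre u) \<and> na v = snd (pre u) \<and>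
                     lab u = (winf T le w (fst (pre u)), snd (pre u) + 1))"
  using lab_rule by metis

lemma lab_rep: "u \<in> N \<Longrightarrow> rep u \<Longrightarrow> lab u = pre u"
  using lab_rule by metis

lemma pre_child: "pre (p @ [a]) = (the (capp T le a (idl p)), na p)"
  unfolding km_pre_def by simp

lemma root_lab: "lab [] = (dc le {x0}, 0)"
proof -
  have "\<not> rep []" unfolding km_rep_def proper_anc_def by simp
  moreover have "\<not> (\<exists>v. proper_anc v [] \<and> idl v \<subset> fst (pre []) \<and> na v = snd (pre []))"
    unfolding proper_anc_def by simp
  ultimately have "lab [] = pre []" using lab_rule[OF rootN] by simp
  then show ?thesis unfolding km_pre_def by simp
qed

lemma prefixN: "v @ w \<in> N \<Longrightarrow> v \<in> N"
proof (induction w rule: rev_induct)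
  case Nil then show ?case by simp
next
  case (snoc a w) then show ?case using parN[of "v @ w" a] by simp
qed

lemma child_facts:
  assumes u: "p @ [a] \<in> N"
  obtains J where "capp T le a (idl p) = Some J" "cstep T le a (idl p) J" "p \<in> N" "\<not> rep p"
    "lab (p @ [a]) = (J, na p) \<or>
     (\<exists>v w. w \<noteq> [] \<and> p @ [a] = v @ w \<and> idl v \<subset> J \<and> na v = na p \<and>
            lab (p @ [a]) = (winf T le w J, na p + 1))"
proof -
  have p: "p \<in> N" using parN[OF u] .
  then have cc: "\<not> rep p" "capp T le a (idl p) \<noteq> None" using child_iff[OF p] u by auto
  then obtain J where J: "capp T le a (idl p) = Some J" by blast
  have "pre (p @ [a]) = (J, na p)" using J pre_child by simp
  then show ?thesis using that[OF J capp_SomeD[OF J] p cc(1)] lab_cases[OF u] by auto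
qed

lemma node_Idl: "u \<in> N \<Longrightarrow> idl u \<in> Idl le"
proof (induction u rule: rev_induct)
  case Nil then show ?case using root_lab dc_single_Idl by simp
next
  case (snoc a p)
  obtain J where J: "cstep T le a (idl p) J"
    "lab (p @ [a]) = (J, na p) \<or>
     (\<exists>v w. w \<noteq> [] \<and> p @ [a] = v @ w \<and> idl v \<subset> J \<and> na v = na p \<and>
            lab (p @ [a]) = (winf T le w J, na p + 1))" by (rule child_facts[OF snoc.prems]) blast
  have JI: "J \<in> Idl le" using J(1) cstep_Idl by blast
  show ?case using J(2) JI winf_Idl by auto
qed

lemma node_dom: "u \<in> N \<Longrightarrow> dominated x0 (idl u)"
proof (induction u rule: rev_induct)
  case Nil
  have "steps T [] x0 x0" by simp
  then show ?case using root_lab unfolding dominated_def dc_def by (auto intro!: exI[of _ "[]"])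
next
  case (snoc a p)
  obtain J where J: "cstep T le a (idl p) J" "p \<in> N"
    "lab (p @ [a]) = (J, na p) \<or>
     (\<exists>v w. w \<noteq> [] \<and> p @ [a] = v @ w \<and> idl v \<subset> J \<and> na v = na p \<and>
            lab (p @ [a]) = (winf T le w J, na p + 1))" by (rule child_facts[OF snoc.prems]) blast
  have "dominated x0 J" using dom_cstep[OF snoc.IH[OF J(2)] J(1)] .
  then show ?case using J(3) dom_winf by auto
qed

lemma pre_sub: "p @ [a] \<in> N \<Longrightarrow> capp T le a (idl p) = Some J \<Longrightarrow> J \<subseteq> idl (p @ [a])"
proof -
  assume u: "p @ [a] \<in> N" and c: "capp T le a (idl p) = Some J"
  obtain J' where J': "capp T le a (idl p) = Some J'"
    "lab (p @ [a]) = (J', na p) \<or>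
     (\<exists>v w. w \<noteq> [] \<and> p @ [a] = v @ w \<and> idl v \<subset> J' \<and> na v = na p \<and>
            lab (p @ [a]) = (winf T le w J', na p + 1))" by (rule child_facts[OF u]) blast
  then have JJ: "J' = J" using c by simp
  show ?thesis
  proof (cases "lab (p @ [a]) = (J', na p)")
    case True then show ?thesis using JJ by simp
  next
    case False
    then obtain w where "lab (p @ [a]) = (winf T le w J', na p + 1)" using J'(2) by blast
    then show ?thesis using JJ winf_sup[of J' w] by simp
  qed
qed

lemma na_mono: "v @ z \<in> N \<Longrightarrow> na v \<le> na (v @ z) \<and> (na v = na (v @ z) \<longrightarrow> wapp T le z (idl v) = Some (idl (v @ z)))"
proof (induction z rule: rev_induct)
  case Nil then show ?case by simp
next
  case (snoc a z)
  have u: "(v @ z) @ [a] \<in> N" using snoc.prems by simp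
  obtain J where J: "capp T le a (idl (v @ z)) = Some J" "v @ z \<in> N"
    "lab ((v @ z) @ [a]) = (J, na (v @ z)) \<or>
     (\<exists>v' w. w \<noteq> [] \<and> (v @ z) @ [a] = v' @ w \<and> idl v' \<subset> J \<and> na v' = na (v @ z) \<and>
            lab ((v @ z) @ [a]) = (winf T le w J, na (v @ z) + 1))" by (rule child_facts[OF u]) blast
  note IH = snoc.IH[OF J(2)]
  show ?case
  proof (cases "lab ((v @ z) @ [a]) = (J, na (v @ z))")
    case True
    then show ?thesis using IH J(1) by (auto simp: wapp_append)
  next
    case False
    then have "na ((v @ z) @ [a]) = na (v @ z) + 1" using J(3) by auto
    then show ?thesis using IH by simp
  qed
qed

lemma L_empty_mono: "Idl_level le n = {} \<Longrightarrow> n \<le> m \<Longrightarrow> Idl_level le m = {}"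
proof (induction m)
  case 0 then show ?case by simp
next
  case (Suc m)
  show ?case
  proof (cases "n = Suc m")
    case True then show ?thesis using Suc.prems by simp
  next
    case False
    then have "Idl_level le m = {}" using Suc by simp
    then show ?thesis by simp
  qed
qed

lemma level_branch: "v @ z \<in> N \<Longrightarrow> idl v \<in> Idl_level le k \<Longrightarrow> idl (v @ z) \<in> Idl_level le (k + (na (v @ z) - na v))"
proof (induction z rule: rev_induct)
  case Nil then show ?case by simp
next
  case (snoc a z)
  have u: "(v @ z) @ [a] \<in> N" using snoc.prems by simp
  obtain J where J: "capp T le a (idl (v @ z)) = Some J" "cstep T le a (idl (v @ z)) J" "v @ z \<in> N"
    "lab ((v @ z) @ [a]) = (J, na (v @ z)) \<or>
     (\<exists>v' w. w \<noteq> [] \<and> (v @ z) @ [a] = v' @ w \<and> idl v' \<subset> J \<and> na v' = na (v @ z) \<and>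
            lab ((v @ z) @ [a]) = (winf T le w J, na (v @ z) + 1))" by (rule child_facts[OF u]) blast
  define k' where "k' = k + (na (v @ z) - na v)"
  have IH: "idl (v @ z) \<in> Idl_level le k'" using snoc.IH[OF J(3) snoc.prems(2)] unfolding k'_def .
  have JL: "J \<in> Idl_level le k'" using level_cstep[OF IH J(2)] .
  have mv: "na v \<le> na (v @ z)" using na_mono[OF J(3)] by blast
  show ?case
  proof (cases "lab ((v @ z) @ [a]) = (J, na (v @ z))")
    case True
    then show ?thesis using JL unfolding k'_def by simp
  next
    case False
    then obtain v' w where vw: "w \<noteq> []" "(v @ z) @ [a] = v' @ w" "idl v' \<subset> J" "na v' = na (v @ z)"
      "lab ((v @ z) @ [a]) = (winf T le w J, na (v @ z) + 1)" using J(4) by blast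
    obtain w' b where wb: "w = w' @ [b]" using vw(1) by (metis rev_exhaust)
    then have eq: "v @ z = v' @ w'" "b = a" using vw(2) by auto
    have "wapp T le w' (idl v') = Some (idl (v @ z))"
      using na_mono[of v' w'] J(3) eq vw(4) by simp
    then have wv': "wapp T le w (idl v') = Some J" using J(1) eq(2) wb by (simp add: wapp_append)
    have JI: "J \<in> Idl le" using J(2) cstep_Idl by blast
    obtain Q where Q: "wapp T le w J = Some Q" "J \<subset> Q" using wapp_sstrict[OF wv' vw(3) JI] by blast
    have "winf T le w J \<in> Idl_level le (Suc k')" using winf_level[OF JL Q] .
    moreover have "k + (na ((v @ z) @ [a]) - na v) = Suc k'" using vw(5) mv unfolding k'_def by simp
    ultimately show ?thesis using vw(5) by simp
  qed
qed

lemma eps_na: "u \<in> N \<Longrightarrow> proper_anc v u \<Longrightarrow> idl v = idl u \<Longrightarrow> na v = na u"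
proof (rule ccontr)
  assume u: "u \<in> N" and pa: "proper_anc v u" and eq: "idl v = idl u" and ne: "na v \<noteq> na u"
  obtain z where z: "u = v @ z" using pa unfolding proper_anc_def by blast
  have vN: "v \<in> N" using prefixN u z by blast
  define m where "m = na u - na v"
  have m: "m \<ge> 1" using na_mono[of v z] u z ne unfolding m_def by auto
  have step: "idl v \<in> Idl_level le k \<Longrightarrow> idl v \<in> Idl_level le (k + m)" for k
    using level_branch[of v z k] u z eq unfolding m_def by simp
  have all: "idl v \<in> Idl_level le (j * m)" for j
  proof (induction j)
    case 0 then show ?case using node_Idl[OF vN] by simp
  next
    case (Suc j) then show ?case using step[of "j * m"] by (simp add: add.commute)
  qed
  obtain n where n: "Idl_level le n = {}" using levels by blast
  have "n \<le> n * m" using m by simp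
  then have "Idl_level le (n * m) = {}" using L_empty_mono[OF n] by blast
  then show False using all[of n] by simp
qed

lemma aut_na: "aut_reads N lab w c d \<Longrightarrow> na c \<le> na d \<and> (na c = na d \<longrightarrow> wapp T le w (idl c) = Some (idl d))"
proof (induction rule: aut_reads.induct)
  case (nil c) then show ?case by simp
next
  case (eps c c' w d)
  then have "km_leaf N c" "proper_anc c' c" "idl c' = idl c" unfolding aut_step_def by auto
  then have "na c' = na c" "idl c' = idl c" using eps_na km_leaf_def by blast+
  then show ?case using eps.IH by simp
next
  case (letter a c c' w d)
  then have cN: "c \<in> N" "c' = c @ [a]" "c' \<in> N" unfolding aut_step_def by auto
  have nm: "na c \<le> na c'" "na c = na c' \<longrightarrow> wapp T le [a] (idl c) = Some (idl c')"
    using na_mono[of c "[a]"] cN by auto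
  show ?case
  proof (intro conjI impI)
    show "na c \<le> na d" using nm letter.IH by linarith
    assume e: "na c = na d"
    then have e1: "na c = na c'" "na c' = na d" using nm letter.IH by linarith+
    then have "capp T le a (idl c) = Some (idl c')" using nm by (auto split: option.splits)
    then show "wapp T le (a # w) (idl c) = Some (idl d)" using e1 letter.IH by simp
  qed
qed

lemma aut_append: "aut_reads N lab u c d \<Longrightarrow> aut_reads N lab v d e \<Longrightarrow> aut_reads N lab (u @ v) c e"
proof (induction rule: aut_reads.induct)
  case (nil c) then show ?case by simp
next
  case (eps c c' w d) then show ?case by (auto intro: aut_reads.eps)
next
  case (letter a c c' w d) then show ?case by (auto intro: aut_reads.letter)
qed

lemma sim_step:
  assumes c: "c \<in> N" and s: "s \<in> idl c" and t: "T a s s'"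
  shows "\<exists>d. d \<in> N \<and> aut_reads N lab [a] c d \<and> s' \<in> idl d"
proof -
  have cI: "idl c \<in> Idl le" using node_Idl[OF c] .
  have "s' \<in> Post T (idl c) a" using s t unfolding Post_def by blast
  from Zorn_step[OF cI this] obtain J where J: "cstep T le a (idl c) J" "s' \<in> J" by blast
  have cap: "capp T le a (idl c) = Some J" using capp_Some[OF J(1)] .
  show ?thesis
  proof (cases "rep c")
    case False
    then have cN: "c @ [a] \<in> N" using child_iff[OF c] cap by simp
    have "s' \<in> idl (c @ [a])" using pre_sub[OF cN cap] J(2) by blast
    moreover have "aut_reads N lab [a] c (c @ [a])"
      by (rule aut_reads.letter[OF _ aut_reads.nil]) (use c cN in \<open>auto simp: aut_step_def\<close>)
    ultimately show ?thesis using cN by blast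
  next
    case True
    have "lab c = pre c" using lab_rep[OF c True] .
    then obtain v where v: "proper_anc v c" "idl v = idl c" using True unfolding km_rep_def by auto
    obtain z where z: "z \<noteq> []" "c = v @ z" using v(1) unfolding proper_anc_def by blast
    obtain b z' where bz: "z = b # z'" using z(1) by (cases z) auto
    have vbN: "v @ [b] \<in> N" using prefixN[of "v @ [b]" z'] c z(2) bz by simp
    have vN: "v \<in> N" using parN[OF vbN] .
    have "\<not> rep v" using child_iff[OF vN] vbN by blast
    then have vaN: "v @ [a] \<in> N" using child_iff[OF vN] cap v(2) by simp
    have "s' \<in> idl (v @ [a])" using pre_sub[OF vaN] cap v(2) J(2) by auto
    moreover have leaf: "km_leaf N c" unfolding km_leaf_def using c child_iff[OF c] True by blast
    have "aut_reads N lab [a] c (v @ [a])"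
    proof (rule aut_reads.eps)
      show "aut_step N lab None c v" unfolding aut_step_def using leaf v by simp
      show "aut_reads N lab [a] v (v @ [a])"
        by (rule aut_reads.letter[OF _ aut_reads.nil]) (use vN vaN in \<open>auto simp: aut_step_def\<close>)
    qed
    ultimately show ?thesis using vaN by blast
  qed
qed

lemma sim_steps: "c \<in> N \<Longrightarrow> s \<in> idl c \<Longrightarrow> steps T w s s' \<Longrightarrow> \<exists>d. d \<in> N \<and> aut_reads N lab w c d \<and> s' \<in> idl d"
proof (induction w arbitrary: c s)
  case Nil then show ?case by (auto intro: aut_reads.nil)
next
  case (Cons a w)
  then obtain m where m: "T a s m" "steps T w m s'" by auto
  obtain d where d: "d \<in> N" "aut_reads N lab [a] c d" "m \<in> idl d" using sim_step[OF Cons.prems(1,2) m(1)] by blast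
  obtain e where e: "e \<in> N" "aut_reads N lab w d e" "s' \<in> idl e" using Cons.IH[OF d(1) d(3) m(2)] by blast
  have "aut_reads N lab ([a] @ w) c e" using aut_append[OF d(2) e(2)] .
  then show ?case using e by auto
qed

end

theorem proposition17:
  fixes T :: "'a::finite \<Rightarrow> 'x \<Rightarrow> 'x \<Rightarrow> bool"
    and le :: "'x \<Rightarrow> 'x \<Rightarrow> bool"
    and x y :: 'x
    and N :: "'a list set"
    and lab :: "'a list \<Rightarrow> 'x set \<times> nat"
  assumes "very_WSTS T le"
    and "positive_ts T le"
    and "km_tree T le (dc le {x}) N lab"
  shows "rep_coverable T le x y \<longleftrightarrow>
    (\<exists>c d w. c \<in> N \<and> d \<in> N \<and> w \<noteq> [] \<and> aut_reads N lab w c d \<and>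
       snd (lab c) = snd (lab d) \<and> positive_word T le w \<and> y \<in> fst (lab c))"
proof -
  interpret km T le x N lab
    by (rule km.intro, unfold_locales) (use assms in auto)
  have pos: "positive_for T le w s \<Longrightarrow> positive_word T le w" for w s
    using assms(2) unfolding positive_ts_def by blast
  show ?thesis
  proof
    assume "rep_coverable T le x y"
    then obtain z :: "nat \<Rightarrow> 'x" and w0 where z: "steps T w0 x (z 0)"
      "\<forall>i. \<exists>w. w \<noteq> [] \<and> steps T w (z i) (z (Suc i))" "\<forall>i. le y (z i)"
      unfolding rep_coverable_def by blast
    define W where "W i = (SOME w. w \<noteq> [] \<and> steps T w (z i) (z (Suc i)))" for i
    have W: "W i \<noteq> [] \<and> steps T (W i) (z i) (z (Suc i))" for i
      unfolding W_def using someI_ex[OF z(2)[rule_format, of i]] .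
    have xr: "x \<in> idl []" using root_lab refl unfolding dc_def by simp
    obtain c0 where c0: "c0 \<in> N" "aut_reads N lab w0 [] c0" "z 0 \<in> idl c0"
      using sim_steps[OF rootN xr z(1)] by blast
    define C where "C = rec_nat c0 (\<lambda>i c. SOME d. d \<in> N \<and> aut_reads N lab (W i) c d \<and> z (Suc i) \<in> idl d)"
    have C0: "C 0 = c0" unfolding C_def by simp
    have CS: "C (Suc i) = (SOME d. d \<in> N \<and> aut_reads N lab (W i) (C i) d \<and> z (Suc i) \<in> idl d)" for i
      unfolding C_def by simp
    have inv: "C i \<in> N \<and> z i \<in> idl (C i)" for i
    proof (induction i)
      case 0 then show ?case using C0 c0 by simp
    next
      case (Suc i)
      have "\<exists>d. d \<in> N \<and> aut_reads N lab (W i) (C i) d \<and> z (Suc i) \<in> idl d"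
        using sim_steps[of "C i" "z i" "W i" "z (Suc i)"] Suc.IH W[of i] by blast
      from someI_ex[OF this] show ?case unfolding CS[of i] by blast
    qed
    have ar: "aut_reads N lab (W i) (C i) (C (Suc i))" for i
    proof -
      have "\<exists>d. d \<in> N \<and> aut_reads N lab (W i) (C i) d \<and> z (Suc i) \<in> idl d"
        using sim_steps[of "C i" "z i" "W i" "z (Suc i)"] inv[of i] W[of i] by blast
      from someI_ex[OF this] show ?thesis unfolding CS[of i] by blast
    qed
    have path: "n < m \<Longrightarrow> \<exists>u. u \<noteq> [] \<and> steps T u (z n) (z m) \<and> aut_reads N lab u (C n) (C m)" for n m
    proof (induction m)
      case 0 then show ?case by simp
    next
      case (Suc m)
      show ?case
      proof (cases "n = m")
        case True then show ?thesis using W[of m] ar[of m] by blast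
      next
        case False
        then have "n < m" using Suc.prems by simp
        then obtain u where u: "u \<noteq> []" "steps T u (z n) (z m)" "aut_reads N lab u (C n) (C m)"
          using Suc.IH by blast
        have "steps T (u @ W m) (z n) (z (Suc m))" using u(2) W[of m] steps_append by fast
        moreover have "aut_reads N lab (u @ W m) (C n) (C (Suc m))" using aut_append[OF u(3) ar[of m]] .
        ultimately show ?thesis using u(1) by blast
      qed
    qed
    have "finite (C ` UNIV)" using finN inv by (meson finite_subset image_subsetI)
    from pigeonhole_infinite[OF infinite_UNIV_nat this] obtain a0 where
      a0: "infinite {a \<in> UNIV. C a = C a0}" by blast
    define S where "S = {a \<in> UNIV. C a = C a0}"
    have Sinf: "infinite S" using a0 unfolding S_def .
    define h where "h = enumerate S"
    obtain i j where ij: "i < j" "le (z (h i)) (z (h j))" using wqo[of "\<lambda>k. z (h k)"] by blast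
    have hij: "h i < h j" unfolding h_def using enumerate_mono[OF ij(1) Sinf] .
    have Ch: "C (h k) = C a0" for k using enumerate_in_set[OF Sinf, of k] unfolding h_def S_def by simp
    obtain u where u: "u \<noteq> []" "steps T u (z (h i)) (z (h j))" "aut_reads N lab u (C (h i)) (C (h j))"
      using path[OF hij] by blast
    have pw: "positive_word T le u"
      using pos[of u "z (h i)"] u(2) ij(2) unfolding positive_for_def by blast
    have "idl (C a0) \<in> Idl le" using node_Idl inv by (metis Ch)
    moreover have "z (h i) \<in> idl (C a0)" using inv[of "h i"] Ch by simp
    ultimately have "y \<in> idl (C a0)" using z(3) unfolding Idl_def down_closed_def by blast
    then show "\<exists>c d w. c \<in> N \<and> d \<in> N \<and> w \<noteq> [] \<and> aut_reads N lab w c d \<and>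
       snd (lab c) = snd (lab d) \<and> positive_word T le w \<and> y \<in> fst (lab c)"
      using u(1) u(3) pw Ch inv[of a0] by (metis)
  next
    assume "\<exists>c d w. c \<in> N \<and> d \<in> N \<and> w \<noteq> [] \<and> aut_reads N lab w c d \<and>
       snd (lab c) = snd (lab d) \<and> positive_word T le w \<and> y \<in> fst (lab c)"
    then obtain c d w where cd: "c \<in> N" "d \<in> N" "w \<noteq> []" "aut_reads N lab w c d"
       "na c = na d" "positive_word T le w" "y \<in> idl c" by blast
    have wa: "wapp T le w (idl c) = Some (idl d)" using aut_na[OF cd(4)] cd(5) by simp
    have cI: "idl c \<in> Idl le" using node_Idl[OF cd(1)] .
    obtain f g where fg: "f \<in> idl c" "steps T w f g" using exec_wapp[OF cI wa] by blast
    obtain m where m: "m \<in> idl c" "le y m" "le f m" using cI fg(1) cd(7) unfolding Idl_def directed_def by blast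
    obtain p r where pr: "steps T p x r" "le m r" using node_dom[OF cd(1)] m(1) unfolding dominated_def by blast
    have fr: "le f r" using trans[OF m(3) pr(2)] .
    obtain gr where gr: "steps T w r gr" using steps_mono[OF fg(2) fr] by blast
    have nx: "le r s \<Longrightarrow> \<exists>s'. steps T w s s' \<and> le s s'" for s
    proof -
      assume "le r s"
      then obtain g' where "steps T w s g'" using steps_mono[OF gr] by blast
      then show ?thesis using cd(6) unfolding positive_word_def positive_for_def by blast
    qed
    define nxt where "nxt s = (SOME s'. steps T w s s' \<and> le s s')" for s
    have nxt: "le r s \<Longrightarrow> steps T w s (nxt s) \<and> le s (nxt s)" for s
      unfolding nxt_def using someI_ex[OF nx] by blast
    define Z where "Z i = (nxt ^^ i) r" for i
    have Zr: "le r (Z i)" for i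
    proof (induction i)
      case 0 then show ?case using refl unfolding Z_def by simp
    next
      case (Suc i)
      then have "le (Z i) (Z (Suc i))" using nxt[of "Z i"] unfolding Z_def by simp
      then show ?case using trans Suc.IH by blast
    qed
    have "rep_coverable T le x y"
      unfolding rep_coverable_def
    proof (rule exI[of _ Z], intro conjI allI)
      show "\<exists>w. steps T w x (Z 0)" using pr(1) unfolding Z_def by auto
    next
      fix i
      show "\<exists>w. w \<noteq> [] \<and> steps T w (Z i) (Z (Suc i))"
        using nxt[OF Zr[of i]] cd(3) unfolding Z_def by auto
    next
      fix i
      show "le y (Z i)" using trans[OF m(2) trans[OF pr(2) Zr[of i]]] .
    qed
    then show "rep_coverable T le x y" .
  qed
qed

end
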